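(* For every $i\in\{0,1,2,3\}$ the subshift $(X_i,T)$ has zero topological entropy.
   Context: Let $\tau:\mathbb N\to(0,\infty)$ be non-increasing with $\tau(n)\to0$. Fix integers $2\le q_1<q_2<\cdots$ such that for every $k\ge1$: (i) $q_{k+1}>q_k^4+3q_k$; (ii) $\tau(\lceil q_{k+1}/3\rceil)<\frac1{16q_k}$. For $k\ge1$ put $q^{(0)}_k=q_{2k}$, $q^{(1)}_k=q_{2k+1}$, $q^{(2)}_k=q^{(0)}_k-1$, $q^{(3)}_k=q^{(1)}_k-1$, and $L^{(i)}_k=\lfloor q^{(i)}_{k+1}/(3q^{(i)}_k)\rfloor$. Let $s^{(i)}_k\in\{-1,0,1\}^{\mathbb N}$ (indices $n\ge1$) be given by $s^{(i)}_k(n)=1$ if $n=jq^{(i)}_k$ with $1\le j\le L^{(i)}_k$, $s^{(i)}_k(n)=-1$ if $n=jq^{(i)}_k$ with $L^{(i)}_k<j\le2L^{(i)}_k$, and $s^{(i)}_k(n)=0$ otherwise. For $w\in\{-1,0,1\}^{\mathbb N}$ and $p\in\mathbb N_0$ let $\sigma^{-p}w$ be defined by $(\sigma^{-p}w)(n)=0$ for $1\le n\le p$ and $(\sigma^{-p}w)(n)=w(n-p)$ for $n>p$. For $l\le m$ write $w|_l^m=(w_l,\dots,w_m)$. Let $R^{(i)}_k=\{(\sigma^{-p}s^{(i)}_k)|_{q^{(i)}_k}^{q^{(i)}_{k+1}-1}:p=0,1,\dots,q^{(i)}_k\}$ and $P^{(i)}=\{y\in\{-1,0,1\}^{\mathbb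 N}: y(n)=0\text{ for }1\le n<q^{(i)}_1,\ y|_{q^{(i)}_k}^{q^{(i)}_{k+1}-1}\in R^{(i)}_k\text{ for all }k\ge1\}$. Let $Z=\{-1,0,1\}^{\mathbb N}\times\{-1,0,1\}^{\mathbb Z}$, where each factor carries the metric $d(u,v)=3^{-\min\{|m|:u_m\neq v_m\}}$ and $Z$ the maximum of the two coordinate metrics. $\sigma$ is the left shift $(\sigma u)_m=u_{m+1}$ (invertible on $\{-1,0,1\}^{\mathbb Z}$). Define $T:Z\to Z$, $T(y,z)=(\sigma y,\sigma^{y_1}z)$, and for $i\in\{0,1,2,3\}$ let $X_i=\overline{\bigcup_{n\ge0}T^n(P^{(i)}\times\{-1,0,1\}^{\mathbb Z})}$ (a closed $T$-invariant subset of $Z$). *)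

theory Defs
  imports "HOL-Analysis.Analysis"
begin

text \<open>One-sided sequences in {-1,0,1}^N (indices n >= 1) are represented as functions
  nat => int; the (meaningless) coordinate 0 is normalised to 0.
  Two-sided sequences are functions int => int.\<close>

definition Yspace :: "(nat \<Rightarrow> int) set" where
  "Yspace = {y. y 0 = 0 \<and> (\<forall>n\<ge>1. y n \<in> {-1,0,1})}"

definition Zspace2 :: "(int \<Rightarrow> int) set" where
  "Zspace2 = {z. \<forall>m. z m \<in> {-1,0,1}}"

definition Zspace :: "((nat \<Rightarrow> int) \<times> (int \<Rightarrow> int)) set" where
  "Zspace = Yspace \<times> Zspace2"

definition dY :: "(nat \<Rightarrow> int) \<Rightarrow> (nat \<Rightarrow> int) \<Rightarrow> real" where
  "dY u v = (if (\<forall>m\<ge>1. u m = v m) then 0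
             else 3 powr (- real (LEAST m. m \<ge> 1 \<and> u m \<noteq> v m)))"

definition dZ2 :: "(int \<Rightarrow> int) \<Rightarrow> (int \<Rightarrow> int) \<Rightarrow> real" where
  "dZ2 u v = (if u = v then 0
             else 3 powr (- real (LEAST k::nat. \<exists>m. nat \<bar>m\<bar> = k \<and> u m \<noteq> v m)))"

definition dZ :: "((nat \<Rightarrow> int) \<times> (int \<Rightarrow> int)) \<Rightarrow> ((nat \<Rightarrow> int) \<times> (int \<Rightarrow> int)) \<Rightarrow> real" where
  "dZ a b = max (dY (fst a) (fst b)) (dZ2 (snd a) (snd b))"

definition shiftY :: "(nat \<Rightarrow> int) \<Rightarrow> (nat \<Rightarrow> int)" where
  "shiftY y = (\<lambda>n. if n = 0 then 0 else y (Suc n))"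

definition shiftZpow :: "int \<Rightarrow> (int \<Rightarrow> int) \<Rightarrow> (int \<Rightarrow> int)" where
  "shiftZpow k z = (\<lambda>m. z (m + k))"

definition Tmap :: "((nat \<Rightarrow> int) \<times> (int \<Rightarrow> int)) \<Rightarrow> ((nat \<Rightarrow> int) \<times> (int \<Rightarrow> int))" where
  "Tmap p = (shiftY (fst p), shiftZpow (fst p 1) (snd p))"

definition qq :: "(nat \<Rightarrow> nat) \<Rightarrow> nat \<Rightarrow> nat \<Rightarrow> nat" where
  "qq q i k = (if i = 0 then q (2*k) else if i = 1 then q (2*k+1)
               else if i = 2 then q (2*k) - 1 else q (2*k+1) - 1)"

definition LL :: "(nat \<Rightarrow> nat) \<Rightarrow> nat \<Rightarrow> nat \<Rightarrow> nat" where
  "LL q i k = qq q i (Suc k) div (3 * qq q i k)"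

definition sw :: "(nat \<Rightarrow> nat) \<Rightarrow> nat \<Rightarrow> nat \<Rightarrow> nat \<Rightarrow> int" where
  "sw q i k n = (if (\<exists>j. 1 \<le> j \<and> j \<le> LL q i k \<and> n = j * qq q i k) then 1
                 else if (\<exists>j. LL q i k < j \<and> j \<le> 2 * LL q i k \<and> n = j * qq q i k) then -1
                 else 0)"

definition shiftR :: "nat \<Rightarrow> (nat \<Rightarrow> int) \<Rightarrow> (nat \<Rightarrow> int)" where
  "shiftR p w = (\<lambda>n. if n \<le> p then 0 else w (n - p))"

definition inR :: "(nat \<Rightarrow> nat) \<Rightarrow> nat \<Rightarrow> nat \<Rightarrow> (nat \<Rightarrow> int) \<Rightarrow> bool" where
  "inR q i k y = (\<exists>p \<le> qq q i k. \<forall>n. qq q i k \<le> n \<and> n \<le> qq q i (Suc k) - 1 \<longrightarrow>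
                     y n = shiftR p (sw q i k) n)"

definition Pset :: "(nat \<Rightarrow> nat) \<Rightarrow> nat \<Rightarrow> (nat \<Rightarrow> int) set" where
  "Pset q i = {y \<in> Yspace. (\<forall>n. 1 \<le> n \<and> n < qq q i 1 \<longrightarrow> y n = 0) \<and> (\<forall>k\<ge>1. inR q i k y)}"

definition dclosure :: "('a \<Rightarrow> 'a \<Rightarrow> real) \<Rightarrow> 'a set \<Rightarrow> 'a set \<Rightarrow> 'a set" where
  "dclosure d S A = {x \<in> S. \<forall>e>0. \<exists>a\<in>A. d x a < e}"

definition Xset :: "(nat \<Rightarrow> nat) \<Rightarrow> nat \<Rightarrow> ((nat \<Rightarrow> int) \<times> (int \<Rightarrow> int)) set" where
  "Xset q i = dclosure dZ Zspace (\<Union>n. (Tmap ^^ n) ` (Pset q i \<times> Zspace2))"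

definition bowen_dist :: "('a \<Rightarrow> 'a \<Rightarrow> real) \<Rightarrow> ('a \<Rightarrow> 'a) \<Rightarrow> nat \<Rightarrow> 'a \<Rightarrow> 'a \<Rightarrow> real" where
  "bowen_dist d T n x y = Max ({d ((T ^^ k) x) ((T ^^ k) y) | k. k < n} \<union> {0})"

definition separated :: "'a set \<Rightarrow> ('a \<Rightarrow> 'a \<Rightarrow> real) \<Rightarrow> ('a \<Rightarrow> 'a) \<Rightarrow> nat \<Rightarrow> real \<Rightarrow> 'a set \<Rightarrow> bool" where
  "separated X d T n e E \<longleftrightarrow> E \<subseteq> X \<and> finite E \<and>
     (\<forall>x\<in>E. \<forall>y\<in>E. x \<noteq> y \<longrightarrow> bowen_dist d T n x y > e)"

definition sep_num :: "'a set \<Rightarrow> ('a \<Rightarrow> 'a \<Rightarrow> real) \<Rightarrow> ('a \<Rightarrow> 'a) \<Rightarrow> nat \<Rightarrow> real \<Rightarrow> ereal" where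
  "sep_num X d T n e = (SUP E \<in> {E. separated X d T n e E}. ereal (real (card E)))"

definition log_sep_rate :: "'a set \<Rightarrow> ('a \<Rightarrow> 'a \<Rightarrow> real) \<Rightarrow> ('a \<Rightarrow> 'a) \<Rightarrow> real \<Rightarrow> nat \<Rightarrow> ereal" where
  "log_sep_rate X d T e n = (if sep_num X d T n e = \<infinity> then \<infinity>
      else ereal (ln (real_of_ereal (sep_num X d T n e)) / real n))"

text \<open>h(T) = lim_{e\<rightarrow>0} limsup_n (1/n) log s(n,e) = sup_{e>0} limsup_n ... (monotone in e).\<close>
definition top_entropy :: "'a set \<Rightarrow> ('a \<Rightarrow> 'a \<Rightarrow> real) \<Rightarrow> ('a \<Rightarrow> 'a) \<Rightarrow> ereal" where
  "top_entropy X d T = (SUP e \<in> {0<..}. limsup (log_sep_rate X d T e))"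

end

theory Submission
  imports Defs "HOL-Real_Asymp.Real_Asymp"
begin

definition Spaced :: "nat \<Rightarrow> (nat \<Rightarrow> int) \<Rightarrow> bool" where
  "Spaced D y \<longleftrightarrow> (\<forall>a b. D \<le> a \<longrightarrow> a < b \<longrightarrow> y a \<noteq> 0 \<longrightarrow> y b \<noteq> 0 \<longrightarrow> a + D \<le> b)"

lemma q_ge2:
  assumes q1: "q 1 \<ge> (2::nat)" and q_inc: "\<forall>k\<ge>1. q k < q (Suc k)"
  shows "n \<ge> 1 \<Longrightarrow> q n \<ge> 2"
proof (induction n)
  case 0 then show ?case by simp
next
  case (Suc n)
  show ?case
  proof (cases "n = 0")
    case True then show ?thesis using q1 by simp
  next
    case False
    then have "q n \<ge> 2" using Suc by simp
    moreover have "q n < q (Suc n)" using q_inc False by simp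
    ultimately show ?thesis by simp
  qed
qed

lemma q_six:
  assumes q1: "q 1 \<ge> (2::nat)" and q_inc: "\<forall>k\<ge>1. q k < q (Suc k)"
    and cond_i: "\<forall>k\<ge>1. q (Suc k) > q k ^ 4 + 3 * q k"
    and n: "n \<ge> 1"
  shows "6 * q n \<le> q (Suc n)"
proof -
  have g: "q n \<ge> 2" using q_ge2[OF q1 q_inc n] .
  have a: "q n ^ 4 = q n * (q n * (q n * q n))" by (simp add: power4_eq_xxxx)
  have "q n * q n \<ge> 2 * 2" using g mult_le_mono by blast
  then have "q n * (q n * q n) \<ge> 2 * (2*2)" using g mult_le_mono by blast
  then have "q n * (q n * (q n * q n)) \<ge> q n * 8" by simp
  then have "q n ^ 4 \<ge> q n * 3" using a by linarith
  moreover have "q (Suc n) > q n ^ 4 + 3 * q n" using cond_i n by blast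
  ultimately show ?thesis by linarith
qed

locale qsetting =
  fixes q :: "nat \<Rightarrow> nat" and i :: nat
  assumes q1: "q 1 \<ge> 2" and q_inc: "\<forall>k\<ge>1. q k < q (Suc k)"
    and cond_i: "\<forall>k\<ge>1. q (Suc k) > q k ^ 4 + 3 * q k"
    and i3: "i \<le> 3"
begin

abbreviation "Q \<equiv> qq q i"

lemma six: "n \<ge> 1 \<Longrightarrow> 6 * q n \<le> q (Suc n)"
  using q_six[OF q1 q_inc cond_i] by blast

lemma ge2: "n \<ge> 1 \<Longrightarrow> q n \<ge> 2"
  using q_ge2[OF q1 q_inc] by blast

lemma Q_basic:
  assumes k: "k \<ge> 1"
  shows "1 \<le> Q k \<and> 6 * Q k \<le> Q (Suc k)"
proof -
  have e1: "6 * q (2*k) \<le> q (Suc (2*k))" using six k by simp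
  have e2: "6 * q (Suc (2*k)) \<le> q (Suc (Suc (2*k)))" using six k by simp
  have e3: "6 * q (Suc (Suc (2*k))) \<le> q (Suc (Suc (Suc (2*k))))" using six k by simp
  have g1: "q (2*k) \<ge> 2" using ge2 k by simp
  have g2: "q (Suc (2*k)) \<ge> 2" using ge2 k by simp
  have s2: "2 * Suc k = Suc (Suc (2*k))" by simp
  have s3: "2 * Suc k + 1 = Suc (Suc (Suc (2*k)))" by simp
  have "i = 0 \<or> i = 1 \<or> i = 2 \<or> i = 3" using i3 by auto
  then show ?thesis
  proof (elim disjE)
    assume "i = 0" then show ?thesis unfolding qq_def using e1 e2 g1 s2 by (simp; arith)
  next
    assume "i = 1" then show ?thesis unfolding qq_def using e3 e2 g2 s3 by (simp; arith)
  next
    assume "i = 2" then show ?thesis unfolding qq_def using e1 e2 g1 s2 by (simp; arith)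
  next
    assume "i = 3" then show ?thesis unfolding qq_def using e3 e2 g2 s3 by (simp; arith)
  qed
qed

lemma Q_pos: "k \<ge> 1 \<Longrightarrow> Q k \<ge> 1" using Q_basic by blast
lemma Q_six: "k \<ge> 1 \<Longrightarrow> 6 * Q k \<le> Q (Suc k)" using Q_basic by blast

lemma Q_less: "1 \<le> m \<Longrightarrow> m < n \<Longrightarrow> Q m < Q n"
proof (induction n)
  case 0 then show ?case by simp
next
  case (Suc n)
  have a: "Q n < Q (Suc n)" if "n \<ge> 1" using Q_six[OF that] Q_pos[OF that] by linarith
  show ?case
  proof (cases "m = n")
    case True then show ?thesis using a Suc by simp
  next
    case False then show ?thesis using Suc a by simp
  qed
qed

lemma Q_le: "1 \<le> m \<Longrightarrow> m \<le> n \<Longrightarrow> Q m \<le> Q n"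
  using Q_less by (cases "m = n") (auto intro: less_imp_le)

lemma Q_ge: "k \<ge> 1 \<Longrightarrow> Q k \<ge> k"
proof (induction k)
  case 0 then show ?case by simp
next
  case (Suc k)
  show ?case
  proof (cases "k = 0")
    case True then show ?thesis using Q_pos by simp
  next
    case False
    then have "Q k < Q (Suc k)" using Q_less by simp
    then show ?thesis using Suc False by simp
  qed
qed

lemma level_ex: "Q 1 \<le> n \<Longrightarrow> \<exists>k\<ge>1. Q k \<le> n \<and> n < Q (Suc k)"
proof -
  have "\<forall>n. Q 1 \<le> n \<and> n < Q (Suc m) \<longrightarrow> (\<exists>k\<ge>1. Q k \<le> n \<and> n < Q (Suc k))" for m
  proof (induction m)
    case 0 then show ?case by simp
  next
    case (Suc m)
    show ?case
    proof (intro allI impI)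
      fix n assume h: "Q 1 \<le> n \<and> n < Q (Suc (Suc m))"
      show "\<exists>k\<ge>1. Q k \<le> n \<and> n < Q (Suc k)"
      proof (cases "n < Q (Suc m)")
        case True then show ?thesis using Suc h by blast
      next
        case False then show ?thesis using h by (intro exI[of _ "Suc m"]) simp
      qed
    qed
  qed
  moreover assume "Q 1 \<le> n"
  moreover have "n < Q (Suc n)" using Q_ge[of "Suc n"] by simp
  ultimately show ?thesis by blast
qed

definition pos :: "(nat \<Rightarrow> int) \<Rightarrow> nat \<Rightarrow> nat" where
  "pos p k = (SOME pk. pk \<le> Q k \<and> (\<forall>n. Q k \<le> n \<and> n \<le> Q (Suc k) - 1 \<longrightarrow> p n = shiftR pk (sw q i k) n))"

lemma nz_struct:
  assumes p: "p \<in> Pset q i" and nz: "p n \<noteq> 0"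
  shows "\<exists>k\<ge>1. Q k \<le> n \<and> n < Q (Suc k) \<and>
           pos p k \<le> Q k \<and> (\<exists>j. 1 \<le> j \<and> j \<le> 2 * LL q i k \<and> n = pos p k + j * Q k)"
proof -
  have pY: "p 0 = 0" and pre: "\<forall>n. 1 \<le> n \<and> n < Q 1 \<longrightarrow> p n = 0"
    and R: "\<forall>k\<ge>1. inR q i k p"
    using p unfolding Pset_def Yspace_def by auto
  have "n \<noteq> 0"
  proof assume "n = 0" then show False using nz pY by simp qed
  then have "Q 1 \<le> n" using pre nz by (meson less_one not_le_imp_less)
  then obtain k where k: "k \<ge> 1" "Q k \<le> n" "n < Q (Suc k)" using level_ex by blast
  define pk where "pk = pos p k"
  have "\<exists>pk. pk \<le> Q k \<and> (\<forall>n. Q k \<le> n \<and> n \<le> Q (Suc k) - 1 \<longrightarrow> p n = shiftR pk (sw q i k) n)"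
    using R k(1) unfolding inR_def by blast
  then have "pk \<le> Q k \<and> (\<forall>n. Q k \<le> n \<and> n \<le> Q (Suc k) - 1 \<longrightarrow> p n = shiftR pk (sw q i k) n)"
    unfolding pk_def pos_def by (rule someI_ex)
  then have pk: "pk \<le> Q k"
    and eq: "\<forall>n. Q k \<le> n \<and> n \<le> Q (Suc k) - 1 \<longrightarrow> p n = shiftR pk (sw q i k) n"
    by auto
  have "p n = shiftR pk (sw q i k) n" using eq k by auto
  then have "\<not> n \<le> pk" and sw: "sw q i k (n - pk) \<noteq> 0" using nz unfolding shiftR_def by (auto split: if_splits)
  then obtain j where j: "1 \<le> j" "j \<le> 2 * LL q i k" "n - pk = j * Q k"
    unfolding sw_def by (auto split: if_splits)
  then have "n = pk + j * Q k" using \<open>\<not> n \<le> pk\<close> by linarith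
  then show ?thesis using k pk j unfolding pk_def by blast
qed

lemma LL_bound: "k \<ge> 1 \<Longrightarrow> 3 * (LL q i k * Q k) \<le> Q (Suc k)"
  unfolding LL_def by (metis div_times_less_eq_dividend mult.assoc mult.commute)

lemma P_spaced:
  assumes p: "p \<in> Pset q i" and K: "K \<ge> 1"
  shows "Spaced (Q K) p"
  unfolding Spaced_def
proof (intro allI impI)
  fix a b assume aK: "Q K \<le> a" and ab: "a < b" and na: "p a \<noteq> 0" and nb: "p b \<noteq> 0"
  obtain ka ja where ka: "ka \<ge> 1" "Q ka \<le> a" "a < Q (Suc ka)" "pos p ka \<le> Q ka" "1 \<le> ja"
      "ja \<le> 2 * LL q i ka" "a = pos p ka + ja * Q ka"
    using nz_struct[OF p na] by blast
  obtain kb jb where kb: "kb \<ge> 1" "Q kb \<le> b" "b < Q (Suc kb)" "pos p kb \<le> Q kb" "1 \<le> jb"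
      "jb \<le> 2 * LL q i kb" "b = pos p kb + jb * Q kb"
    using nz_struct[OF p nb] by blast
  have "\<not> Suc ka \<le> K"
  proof
    assume "Suc ka \<le> K" then have "Q (Suc ka) \<le> Q K" using Q_le by simp
    then show False using aK ka by linarith
  qed
  then have KQ: "Q K \<le> Q ka" using Q_le K by simp
  have "\<not> kb < ka"
  proof
    assume "kb < ka" then have "Q (Suc kb) \<le> Q ka" using Q_le kb by simp
    then show False using ab ka kb by linarith
  qed
  then consider "kb = ka" | "ka < kb" by linarith
  then show "a + Q K \<le> b"
  proof cases
    case 1
    then have "ja * Q ka < jb * Q ka" using ab ka kb by simp
    then have "ja < jb" by (metis mult_less_cancel2)
    then have "Suc ja * Q ka \<le> jb * Q ka" by (intro mult_le_mono1) simp
    then have "ja * Q ka + Q ka \<le> jb * Q ka" by simp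
    moreover have "b = pos p ka + jb * Q ka" using kb 1 by simp
    ultimately show ?thesis using ka KQ by linarith
  next
    case 2
    have "Q (Suc ka) \<le> Q kb" using Q_le 2 ka by simp
    moreover have "ja * Q ka \<le> 2 * (LL q i ka * Q ka)" using mult_le_mono1[OF ka(6), of "Q ka"] by (simp add: mult.assoc)
    moreover have "3 * (LL q i ka * Q ka) \<le> Q (Suc ka)" using LL_bound ka by simp
    moreover have "6 * Q ka \<le> Q (Suc ka)" using Q_six ka by simp
    ultimately show ?thesis using ka kb KQ by linarith
  qed
qed

end

definition psum :: "(nat \<Rightarrow> int) \<Rightarrow> nat \<Rightarrow> int" where
  "psum y k = (\<Sum>j\<in>{1..k}. y j)"

lemma Tmap_iter:
  "(\<forall>n\<ge>1. fst ((Tmap^^k) x) n = fst x (n+k)) \<and> snd ((Tmap^^k) x) = shiftZpow (psum (fst x) k) (snd x)"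
proof (induction k)
  case 0 then show ?case by (simp add: psum_def shiftZpow_def)
next
  case (Suc k)
  let ?u = "(Tmap^^k) x"
  have eq: "(Tmap^^Suc k) x = Tmap ?u" by simp
  have tf: "\<And>p. fst (Tmap p) = shiftY (fst p)" by (simp add: Tmap_def)
  have f: "\<forall>n\<ge>1. fst ((Tmap^^Suc k) x) n = fst x (n + Suc k)"
    using Suc unfolding eq tf shiftY_def by auto
  have u1: "fst ?u 1 = fst x (Suc k)" using Suc by simp
  have ps: "psum (fst x) (Suc k) = psum (fst x) k + fst x (Suc k)"
    unfolding psum_def by simp
  have s: "snd ((Tmap^^Suc k) x) = shiftZpow (psum (fst x) (Suc k)) (snd x)"
  proof -
    have tm: "\<And>p. snd (Tmap p) = shiftZpow (fst p 1) (snd p)" by (simp add: Tmap_def)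
    show ?thesis unfolding eq tm using Suc u1 ps by (auto simp: shiftZpow_def algebra_simps)
  qed
  show ?case using f s by blast
qed

lemma spaced_shift:
  assumes "Spaced D y" "D \<ge> 1" "\<forall>n\<ge>1. y' n = y (n+m)"
  shows "Spaced D y'"
  unfolding Spaced_def
proof (intro allI impI)
  fix a b assume h: "D \<le> a" "a < b" "y' a \<noteq> 0" "y' b \<noteq> 0"
  then have "y (a+m) \<noteq> 0" "y (b+m) \<noteq> 0" using assms by auto
  then have "a + m + D \<le> b + m" using assms(1) h unfolding Spaced_def by simp
  then show "a + D \<le> b" by simp
qed

lemma dY_agree:
  assumes d: "dY u v < 3 powr - real b" and m: "1 \<le> m" "m \<le> b"
  shows "u m = v m"
proof (rule ccontr)
  assume ne: "u m \<noteq> v m"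
  let ?L = "LEAST m. m \<ge> 1 \<and> u m \<noteq> v m"
  have "?L \<le> m" using ne m by (intro Least_le) simp
  then have "3 powr - real b \<le> 3 powr - real ?L" using m by (intro powr_mono) auto
  moreover have "dY u v = 3 powr - real ?L" unfolding dY_def using ne m by auto
  ultimately show False using d by simp
qed

lemma dY_le:
  assumes "\<forall>m. 1 \<le> m \<and> m \<le> M \<longrightarrow> u m = v m"
  shows "dY u v \<le> 3 powr - real (Suc M)"
proof (cases "\<forall>m\<ge>1. u m = v m")
  case True then show ?thesis unfolding dY_def by simp
next
  case False
  let ?L = "LEAST m. m \<ge> 1 \<and> u m \<noteq> v m"
  have ex: "\<exists>m. m \<ge> 1 \<and> u m \<noteq> v m" using False by blast
  have "?L \<ge> 1 \<and> u ?L \<noteq> v ?L" using LeastI_ex[OF ex] .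
  then have "?L \<ge> Suc M" using assms by (meson not_less_eq_eq)
  then have "3 powr - real ?L \<le> 3 powr - real (Suc M)" by (intro powr_mono) auto
  then show ?thesis unfolding dY_def using False by simp
qed

lemma dZ2_le:
  assumes "\<forall>m. \<bar>m\<bar> \<le> int M \<longrightarrow> u m = v m"
  shows "dZ2 u v \<le> 3 powr - real (Suc M)"
proof (cases "u = v")
  case True then show ?thesis unfolding dZ2_def by simp
next
  case False
  let ?L = "LEAST k::nat. \<exists>m. nat \<bar>m\<bar> = k \<and> u m \<noteq> v m"
  obtain m0 where "u m0 \<noteq> v m0" using False by blast
  then have ex: "\<exists>k::nat. \<exists>m. nat \<bar>m\<bar> = k \<and> u m \<noteq> v m" by blast
  obtain m where m: "nat \<bar>m\<bar> = ?L" "u m \<noteq> v m" using LeastI_ex[OF ex] by blast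
  then have "\<bar>m\<bar> > int M" using assms by force
  then have "?L \<ge> Suc M" using m(1) by linarith
  then have "3 powr - real ?L \<le> 3 powr - real (Suc M)" by (intro powr_mono) auto
  then show ?thesis unfolding dZ2_def using False by simp
qed

lemma closure_spaced:
  assumes x: "x \<in> dclosure dZ Zspace U" and U: "\<forall>u\<in>U. Spaced D (fst u)"
  shows "Spaced D (fst x)"
  unfolding Spaced_def
proof (intro allI impI)
  fix a b assume h: "D \<le> a" "a < b" "fst x a \<noteq> 0" "fst x b \<noteq> 0"
  have "(3::real) powr - real b > 0" by simp
  then obtain u where u: "u \<in> U" "dZ x u < 3 powr - real b" using x unfolding dclosure_def by blast
  then have d: "dY (fst x) (fst u) < 3 powr - real b" unfolding dZ_def by simp
  have x0: "fst x 0 = 0" using x unfolding dclosure_def Zspace_def Yspace_def by auto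
  then have "a \<ge> 1" using h by (cases a) auto
  then have "fst u a \<noteq> 0" "fst u b \<noteq> 0" using dY_agree[OF d] h by auto
  then show "a + D \<le> b" using U u h unfolding Spaced_def by blast
qed

lemma psum_bound:
  assumes vals: "\<forall>j\<ge>1. y j \<in> {-1,0,1}" and sp: "Spaced D y" and D: "D \<ge> 1"
  shows "\<bar>psum y k\<bar> \<le> int (D + k div D)"
proof -
  let ?N = "{j\<in>{1..k}. y j \<noteq> 0}"
  have "psum y k = (\<Sum>j\<in>?N. y j)" unfolding psum_def by (rule sum.mono_neutral_right) auto
  then have "\<bar>psum y k\<bar> \<le> (\<Sum>j\<in>?N. \<bar>y j\<bar>)" by (simp add: sum_abs)
  also have "\<dots> = (\<Sum>j\<in>?N. 1)" using vals by (intro sum.cong) auto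
  also have "\<dots> = int (card ?N)" by simp
  finally have 1: "\<bar>psum y k\<bar> \<le> int (card ?N)" .
  let ?S = "{j\<in>{D..k}. y j \<noteq> 0}"
  have sub: "?N \<subseteq> {1..<D} \<union> ?S" by auto
  have "inj_on (\<lambda>j. j div D) ?S"
  proof (rule inj_onI)
    fix a b assume a: "a \<in> ?S" and b: "b \<in> ?S" and e: "a div D = b div D"
    show "a = b"
    proof (rule ccontr)
      assume "a \<noteq> b"
      then consider "a < b" | "b < a" by linarith
      then show False
      proof cases
        case 1 then have "a + D \<le> b" using sp a b unfolding Spaced_def by auto
        then have "(a + D) div D \<le> b div D" by (rule div_le_mono)
        then show False using e D by simp
      next
        case 2 then have "b + D \<le> a" using sp a b unfolding Spaced_def by auto
        then have "(b + D) div D \<le> a div D" by (rule div_le_mono)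
        then show False using e D by simp
      qed
    qed
  qed
  moreover have "(\<lambda>j. j div D) ` ?S \<subseteq> {1..k div D}"
  proof
    fix t assume "t \<in> (\<lambda>j. j div D) ` ?S"
    then obtain j where j: "j \<in> ?S" "t = j div D" by blast
    have "D div D \<le> j div D" using j by (intro div_le_mono) simp
    moreover have "j div D \<le> k div D" using j by (intro div_le_mono) simp
    ultimately show "t \<in> {1..k div D}" using j D by simp
  qed
  ultimately have "card ?S \<le> k div D"
    by (metis card_atLeastAtMost card_inj_on_le finite_atLeastAtMost diff_Suc_1)
  have "card ?N \<le> card ({1..<D} \<union> ?S)" using sub by (intro card_mono) auto
  also have "\<dots> \<le> card {1..<D} + card ?S" by (rule card_Un_le)
  finally have "card ?N \<le> D + k div D" using \<open>card ?S \<le> k div D\<close> by simp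
  then show ?thesis using 1 by linarith
qed

definition Blk :: "nat \<Rightarrow> nat \<Rightarrow> (nat \<Rightarrow> int) set" where
  "Blk D r = {g. (\<forall>j. g j \<noteq> 0 \<longrightarrow> D*r < j \<and> j \<le> D*Suc r) \<and> (\<forall>j. g j \<in> {-1,0,1}) \<and> Spaced D g}"

definition Wset :: "nat \<Rightarrow> nat \<Rightarrow> (nat \<Rightarrow> int) set" where
  "Wset D r = {w. (\<forall>j. w j \<noteq> 0 \<longrightarrow> 1 \<le> j \<and> j \<le> D*r) \<and> (\<forall>j. w j \<in> {-1,0,1}) \<and> Spaced D w}"

lemma spaced_restr: "Spaced D w \<Longrightarrow> Spaced D (\<lambda>j. if P j then w j else 0)"
  unfolding Spaced_def by (auto split: if_splits)

lemma card_vals: "card {-1,0,1::int} = 3" by simp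
lemma cP: "card (PiE {1..D} (\<lambda>_. {-1,0,1::int})) = 3 ^ D"
proof -
  have "card (PiE {1..D} (\<lambda>_. {-1,0,1::int})) = (\<Prod>i\<in>{1..D}. card {-1,0,1::int})" by (simp add: card_PiE)
  also have "\<dots> = 3 ^ D" by (simp only: card_vals prod_constant card_atLeastAtMost) simp
  finally show ?thesis .
qed

lemma blk0: "finite (Blk D 0) \<and> card (Blk D 0) \<le> 3 ^ D"
proof -
  let ?A = "{1..D}"
  let ?P = "PiE ?A (\<lambda>_. {-1,0,1::int})"
  have z: "g j = 0" if "g \<in> Blk D 0" "j \<notin> ?A" for g j
    using that unfolding Blk_def by auto
  have inj: "inj_on (\<lambda>g. restrict g ?A) (Blk D 0)"
  proof (rule inj_onI)
    fix g g' assume g: "g \<in> Blk D 0" and g': "g' \<in> Blk D 0" and e: "restrict g ?A = restrict g' ?A"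
    show "g = g'"
    proof
      fix j show "g j = g' j"
      proof (cases "j \<in> ?A")
        case True then show ?thesis using fun_cong[OF e, of j] by simp
      next
        case False then show ?thesis using z[OF g False] z[OF g' False] by simp
      qed
    qed
  qed
  have im: "(\<lambda>g. restrict g ?A) ` Blk D 0 \<subseteq> ?P"
  proof
    fix t assume "t \<in> (\<lambda>g. restrict g ?A) ` Blk D 0"
    then obtain g where g: "g \<in> Blk D 0" "t = restrict g ?A" by blast
    have "\<forall>j. g j \<in> {-1,0,1}" using g(1) unfolding Blk_def by blast
    then show "t \<in> ?P" using g(2) by auto
  qed
  have fin: "finite ?P" by (rule finite_PiE) auto
  show ?thesis using inj_on_finite[OF inj im fin] card_inj_on_le[OF inj im fin] cP by simp
qed
lemma blkr:
  assumes r: "r \<ge> 1"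
  shows "finite (Blk D r) \<and> card (Blk D r) \<le> 2 * D + 1"
proof -
  let ?I = "{D*r<..D*Suc r} \<times> {-1,1::int}"
  let ?f = "\<lambda>(j,s). \<lambda>x::nat. if x = j then s else 0"
  have sub: "Blk D r \<subseteq> insert (\<lambda>_. 0) (?f ` ?I)"
  proof
    fix g assume g: "g \<in> Blk D r"
    show "g \<in> insert (\<lambda>_. 0) (?f ` ?I)"
    proof (cases "\<exists>j. g j \<noteq> 0")
      case False then have "g = (\<lambda>_. 0)" by auto
      then show ?thesis by simp
    next
      case True
      then obtain j where j: "g j \<noteq> 0" by blast
      have jr: "D*r < j" "j \<le> D * Suc r" using g j unfolding Blk_def by auto
      have gs: "g j \<in> {-1,1}" using g j unfolding Blk_def by auto
      have "g = ?f (j, g j)"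
      proof
        fix x show "g x = ?f (j, g j) x"
        proof (cases "x = j")
          case True then show ?thesis by simp
        next
          case False
          show ?thesis
          proof (rule ccontr)
            assume "g x \<noteq> ?f (j, g j) x"
            then have gx: "g x \<noteq> 0" using False by simp
            have xr: "D*r < x" "x \<le> D * Suc r" using g gx unfolding Blk_def by auto
            have "D \<le> D * r" using r by simp
            have sp: "Spaced D g" using g unfolding Blk_def by auto
            consider "x < j" | "j < x" using False by linarith
            then show False
            proof cases
              case 1 then have "x + D \<le> j" using sp[unfolded Spaced_def, rule_format, of x j] gx j xr \<open>D \<le> D*r\<close> by linarith
              then show False using xr jr by simp
            next
              case 2 then have "j + D \<le> x" using sp[unfolded Spaced_def, rule_format, of j x] gx j jr \<open>D \<le> D*r\<close> by linarith
              then show False using xr jr by simp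
            qed
          qed
        qed
      qed
      moreover have "(j, g j) \<in> ?I" using jr gs by auto
      ultimately show ?thesis by blast
    qed
  qed
  have finI: "finite ?I" by simp
  have cI: "card ?I = 2 * D" by (simp add: card_cartesian_product)
  have "card (insert (\<lambda>_. 0) (?f ` ?I)) \<le> card (?f ` ?I) + 1" by (simp add: card_insert_if finI)
  also have "card (?f ` ?I) \<le> card ?I" using finI by (rule card_image_le)
  finally have "card (insert (\<lambda>_. 0) (?f ` ?I)) \<le> 2 * D + 1" using cI by simp
  moreover have "finite (insert (\<lambda>_. 0) (?f ` ?I))" using finI by simp
  ultimately show ?thesis using sub card_mono[OF _ sub] finite_subset[OF sub] by linarith
qed

lemma W0: "finite (Wset D 0) \<and> card (Wset D 0) \<le> 1"
proof -
  have "Wset D 0 \<subseteq> {\<lambda>_. 0}" unfolding Wset_def by force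
  moreover have "card {\<lambda>_::nat. 0::int} = 1" by simp
  ultimately show ?thesis
    using finite_subset card_mono by (metis finite.emptyI finite.insertI)
qed

lemma Wset_card:
  assumes D: "D \<ge> 1"
  shows "finite (Wset D r) \<and> card (Wset D r) \<le> 3 ^ D * (2 * D + 1) ^ r"
proof (induction r)
  case 0
  have "Wset D 0 \<subseteq> {\<lambda>_. 0}" unfolding Wset_def by force
  moreover have "card {\<lambda>_::nat. 0::int} = 1" by simp
  ultimately have "finite (Wset D 0) \<and> card (Wset D 0) \<le> 1"
    using finite_subset card_mono by (metis finite.emptyI finite.insertI)
  moreover have "(1::nat) \<le> 3 ^ D" by simp
  ultimately show ?case by (metis le_trans mult.right_neutral power_0)
next
  case (Suc r)
  let ?F = "\<lambda>w. ((\<lambda>j. if j \<le> D*r then w j else 0), (\<lambda>j. if D*r < j then w j else 0))"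
  have inj: "inj_on ?F (Wset D (Suc r))"
  proof (rule inj_onI)
    fix w w' assume e: "?F w = ?F w'"
    show "w = w'"
    proof
      fix j
      have "(if j \<le> D*r then w j else 0) = (if j \<le> D*r then w' j else 0)"
        "(if D*r < j then w j else 0) = (if D*r < j then w' j else 0)"
        using e by (auto dest: fun_cong[where x=j])
      then show "w j = w' j" by (cases "j \<le> D*r") auto
    qed
  qed
  have im: "?F ` Wset D (Suc r) \<subseteq> Wset D r \<times> Blk D r"
  proof
    fix t assume "t \<in> ?F ` Wset D (Suc r)"
    then obtain w where w: "w \<in> Wset D (Suc r)" "t = ?F w" by blast
    have sp: "Spaced D w" using w unfolding Wset_def by auto
    have "fst t \<in> Wset D r" using w spaced_restr[OF sp] unfolding Wset_def by auto
    moreover have "snd t \<in> Blk D r" using w spaced_restr[OF sp] unfolding Wset_def Blk_def by auto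
    ultimately show "t \<in> Wset D r \<times> Blk D r" by (cases t) auto
  qed
  have fB: "finite (Blk D r)" using blk0 blkr by (cases "r = 0") auto
  have finP: "finite (Wset D r \<times> Blk D r)" using Suc fB by simp
  have c1: "card (Wset D (Suc r)) \<le> card (Wset D r) * card (Blk D r)"
    using card_inj_on_le[OF inj im finP] by (simp add: card_cartesian_product)
  have fin: "finite (Wset D (Suc r))" using inj_on_finite[OF inj im finP] .
  show ?case
  proof (cases "r = 0")
    case True
    have "card (Wset D 0) \<le> 1" using W0 by simp
    moreover have "card (Blk D r) \<le> 3 ^ D" using blk0 True by simp
    ultimately have "card (Wset D r) * card (Blk D r) \<le> 1 * 3 ^ D" using True by (intro mult_le_mono) auto
    then have "card (Wset D (Suc r)) \<le> 1 * 3 ^ D" using c1 by linarith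
    then show ?thesis using fin True by simp
  next
    case False
    have "card (Wset D (Suc r)) \<le> (3 ^ D * (2 * D + 1) ^ r) * (2 * D + 1)"
    proof -
      have "card (Blk D r) \<le> 2 * D + 1" using blkr[of r D] False by simp
      then have "card (Wset D r) * card (Blk D r) \<le> (3 ^ D * (2 * D + 1) ^ r) * (2 * D + 1)"
        using Suc by (intro mult_le_mono) auto
      then show ?thesis using c1 by linarith
    qed
    then show ?thesis using fin by (simp add: mult.assoc mult.commute mult.left_commute)
  qed
qed

lemma bowen_le:
  assumes "\<forall>k<n. d ((T^^k) x) ((T^^k) y) \<le> c" and "0 \<le> c"
  shows "bowen_dist d T n x y \<le> c"
proof -
  have eq: "{d ((T ^^ k) x) ((T ^^ k) y) | k. k < n} = (\<lambda>k. d ((T ^^ k) x) ((T ^^ k) y)) ` {..<n}" by auto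
  have fin: "finite ({d ((T ^^ k) x) ((T ^^ k) y) | k. k < n} \<union> {0})" unfolding eq by simp
  show ?thesis unfolding bowen_dist_def using assms fin by (subst Max_le_iff) auto
qed

lemma agree_dist:
  assumes fy: "\<forall>j. 1 \<le> j \<and> j \<le> n + M \<longrightarrow> fst x j = fst x' j"
    and fz: "\<forall>m. \<bar>m\<bar> \<le> B \<longrightarrow> snd x m = snd x' m"
    and k: "k < n" and ps: "\<bar>psum (fst x) k\<bar> + int M \<le> B"
  shows "dZ ((Tmap^^k) x) ((Tmap^^k) x') \<le> 3 powr - real (Suc M)"
proof -
  have i1: "\<forall>n\<ge>1. fst ((Tmap^^k) x) n = fst x (n+k)" and i2: "snd ((Tmap^^k) x) = shiftZpow (psum (fst x) k) (snd x)"
    using Tmap_iter by blast+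
  have i1': "\<forall>n\<ge>1. fst ((Tmap^^k) x') n = fst x' (n+k)" and i2': "snd ((Tmap^^k) x') = shiftZpow (psum (fst x') k) (snd x')"
    using Tmap_iter by blast+
  have a: "\<forall>m. 1 \<le> m \<and> m \<le> M \<longrightarrow> fst ((Tmap^^k) x) m = fst ((Tmap^^k) x') m"
    using i1 i1' fy k by auto
  have pe: "psum (fst x) k = psum (fst x') k" unfolding psum_def using fy k by (intro sum.cong) auto
  have b: "\<forall>m. \<bar>m\<bar> \<le> int M \<longrightarrow> snd ((Tmap^^k) x) m = snd ((Tmap^^k) x') m"
  proof (intro allI impI)
    fix m :: int assume "\<bar>m\<bar> \<le> int M"
    then have "\<bar>m + psum (fst x) k\<bar> \<le> B" using ps by linarith
    then show "snd ((Tmap^^k) x) m = snd ((Tmap^^k) x') m"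
      unfolding i2 i2' pe[symmetric] shiftZpow_def using fz by simp
  qed
  show ?thesis unfolding dZ_def using dY_le[OF a] dZ2_le[OF b] by simp
qed

lemma sep_bound:
  assumes XZ: "X \<subseteq> Zspace" and sp: "\<forall>x\<in>X. Spaced D (fst x)" and D: "D \<ge> 1"
    and e: "3 powr - real (Suc M) \<le> e"
  shows "sep_num X dZ Tmap n e \<le>
     ereal (real (3^D * (2*D+1)^((n+M) div D + 1) * 3^(2*(M + D + n div D) + 1)))"
proof -
  define b where "b = M + D + n div D"
  define B where "B = int b"
  define r where "r = (n+M) div D + 1"
  define L where "L = n + M"
  have Lr: "L \<le> D * r"
  proof -
    have "L mod D < D" using D by simp
    moreover have "L = D * (L div D) + L mod D" by simp
    moreover have "D * r = D * (L div D) + D" unfolding r_def L_def by simp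
    ultimately show ?thesis by linarith
  qed
  define \<Phi> where "\<Phi> x = ((\<lambda>j. if 1 \<le> j \<and> j \<le> L then fst x j else 0), restrict (snd x) {-B..B})" for x :: "(nat \<Rightarrow> int) \<times> (int \<Rightarrow> int)"
  let ?P = "PiE {-B..B} (\<lambda>_. {-1,0,1::int})"
  have im: "\<Phi> ` X \<subseteq> Wset D r \<times> ?P"
  proof
    fix t assume "t \<in> \<Phi> ` X"
    then obtain x where x: "x \<in> X" "t = \<Phi> x" by blast
    have "x \<in> Zspace" using XZ x by blast
    then have "fst x \<in> Yspace" "snd x \<in> Zspace2" unfolding Zspace_def by (auto simp: mem_Times_iff)
    then have xy: "\<forall>j\<ge>1. fst x j \<in> {-1,0,1}" and xz: "\<forall>m. snd x m \<in> {-1,0,1}"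
      unfolding Yspace_def Zspace2_def by auto
    have "fst t \<in> Wset D r" unfolding Wset_def x(2) \<Phi>_def
      using xy Lr spaced_restr[of D "fst x"] sp x(1) by auto
    moreover have "snd t \<in> ?P" unfolding x(2) \<Phi>_def using xz by auto
    ultimately show "t \<in> Wset D r \<times> ?P" by (cases t) auto
  qed
  have finW: "finite (Wset D r)" and cW: "card (Wset D r) \<le> 3 ^ D * (2 * D + 1) ^ r"
    using Wset_card[OF D] by auto
  have finP: "finite ?P" by (rule finite_PiE) auto
  have cP: "card ?P = 3 ^ (2*b+1)"
  proof -
    have "card ?P = (\<Prod>i\<in>{-B..B}. card {-1,0,1::int})" by (simp add: card_PiE)
    also have "\<dots> = 3 ^ card {-B..B}" by (simp only: card_vals prod_constant)
    also have "card {-B..B} = 2*b+1" unfolding B_def by simp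
    finally show ?thesis .
  qed
  have finT: "finite (Wset D r \<times> ?P)" using finW finP by simp
  have cT: "card (Wset D r \<times> ?P) \<le> 3^D * (2*D+1)^r * 3^(2*b+1)"
    unfolding card_cartesian_product cP using cW by simp
  show ?thesis unfolding sep_num_def
  proof (rule SUP_least)
    fix E assume "E \<in> {E. separated X dZ Tmap n e E}"
    then have E: "E \<subseteq> X" "finite E" "\<forall>x\<in>E. \<forall>y\<in>E. x \<noteq> y \<longrightarrow> bowen_dist dZ Tmap n x y > e"
      unfolding separated_def by auto
    have inj: "inj_on \<Phi> E"
    proof (rule inj_onI)
      fix x x' assume x: "x \<in> E" and x': "x' \<in> E" and eq: "\<Phi> x = \<Phi> x'"
      show "x = x'"
      proof (rule ccontr)
        assume ne: "x \<noteq> x'"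
        have fy: "\<forall>j. 1 \<le> j \<and> j \<le> n + M \<longrightarrow> fst x j = fst x' j"
        proof (intro allI impI)
          fix j assume "1 \<le> j \<and> j \<le> n + M"
          then show "fst x j = fst x' j" using fun_cong[OF arg_cong[OF eq, of fst], of j] unfolding \<Phi>_def L_def by simp
        qed
        have fz: "\<forall>m. \<bar>m\<bar> \<le> B \<longrightarrow> snd x m = snd x' m"
        proof (intro allI impI)
          fix m :: int assume "\<bar>m\<bar> \<le> B"
          then have "- B \<le> m \<and> m \<le> B" by linarith
          then show "snd x m = snd x' m" using fun_cong[OF arg_cong[OF eq, of snd], of m] unfolding \<Phi>_def by simp
        qed
        have xX: "x \<in> X" using x E by auto
        have "x \<in> Zspace" using XZ xX by blast
        then have "fst x \<in> Yspace" unfolding Zspace_def by (auto simp: mem_Times_iff)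
        then have xy: "\<forall>j\<ge>1. fst x j \<in> {-1,0,1}" unfolding Yspace_def by auto
        have "\<forall>k<n. dZ ((Tmap^^k) x) ((Tmap^^k) x') \<le> 3 powr - real (Suc M)"
        proof (intro allI impI)
          fix k assume k: "k < n"
          have "\<bar>psum (fst x) k\<bar> \<le> int (D + k div D)" using psum_bound[OF xy _ D] sp xX by blast
          moreover have "k div D \<le> n div D" using k by (intro div_le_mono) simp
          ultimately have "\<bar>psum (fst x) k\<bar> + int M \<le> B" unfolding B_def b_def by linarith
          then show "dZ ((Tmap^^k) x) ((Tmap^^k) x') \<le> 3 powr - real (Suc M)"
            using agree_dist[OF fy fz k] by blast
        qed
        then have "bowen_dist dZ Tmap n x x' \<le> 3 powr - real (Suc M)" by (intro bowen_le) auto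
        then show False using E(3) x x' ne e by force
      qed
    qed
    have "card E = card (\<Phi> ` E)" using card_image[OF inj] by simp
    also have "\<dots> \<le> card (Wset D r \<times> ?P)" using im E(1) finT by (intro card_mono) auto
    also have "\<dots> \<le> 3^D * (2*D+1)^r * 3^(2*b+1)" by (rule cT)
    finally have "card E \<le> 3^D * (2*D+1)^r * 3^(2*b+1)" .
    then have "card E \<le> 3^D * (2*D+1)^((n+M) div D + 1) * 3^(2*(M + D + n div D) + 1)"
      unfolding r_def b_def .
    then show "ereal (real (card E)) \<le> ereal (real (3^D * (2*D+1)^((n+M) div D + 1) * 3^(2*(M + D + n div D) + 1)))"
      by (simp only: ereal_less_eq(3) of_nat_le_iff)
  qed
qed

lemma div_real_le: "D > 0 \<Longrightarrow> real (a div D) \<le> real a / real D"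
proof -
  assume D: "D > 0"
  have "(a div D) * D \<le> a" by simp
  then have "real (a div D) * real D \<le> real a" by (metis of_nat_le_iff of_nat_mult)
  then show ?thesis using D by (intro mult_imp_le_div_pos) auto
qed

lemma exists_M: "e > 0 \<Longrightarrow> \<exists>M. 3 powr - real (Suc M) \<le> (e::real)"
proof -
  assume e: "e > 0"
  obtain k where k: "(1/3::real)^k < e" using real_arch_pow_inv[OF e, of "1/3"] by auto
  have a: "3 powr - real (Suc k) = inverse (3 powr real (Suc k))" by (rule powr_minus)
  have b: "(3::real) powr real (Suc k) = 3 ^ Suc k" by (rule powr_realpow) simp
  have "3 powr - real (Suc k) = (1/3::real) ^ Suc k"
    unfolding a b by (simp add: power_one_over inverse_eq_divide)
  also have "\<dots> \<le> (1/3) ^ k" by (intro power_decreasing) auto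
  finally show ?thesis using k by (intro exI[of _ k]) simp
qed

lemma sep_nonneg: "sep_num X d T n e \<ge> 0"
proof -
  have "{} \<in> {E. separated X d T n e E}" unfolding separated_def by simp
  then have "ereal (real (card ({}::'a set))) \<le> sep_num X d T n e"
    unfolding sep_num_def by (rule SUP_upper)
  then show ?thesis by (simp add: zero_ereal_def)
qed

lemma log_rate_nonneg: "log_sep_rate X d T e n \<ge> 0"
proof (cases "sep_num X d T n e = \<infinity>")
  case True then show ?thesis unfolding log_sep_rate_def by simp
next
  case False
  let ?s = "sep_num X d T n e"
  have "ln (real_of_ereal ?s) \<ge> 0"
  proof (cases "\<exists>E. separated X d T n e E \<and> card E \<ge> 1")
    case True
    then obtain E where E: "separated X d T n e E" "card E \<ge> 1" by blast
    have "ereal (real (card E)) \<le> ?s" unfolding sep_num_def using E by (intro SUP_upper) auto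
    moreover have "ereal 1 \<le> ereal (real (card E))" using E(2) by simp
    ultimately have s1: "ereal 1 \<le> ?s" by (rule order_trans[rotated])
    obtain t where t: "?s = ereal t" using False s1 by (cases ?s) auto
    then have "1 \<le> real_of_ereal ?s" using s1 by simp
    then show ?thesis by simp
  next
    case False
    have "?s \<le> 0" unfolding sep_num_def
    proof (rule SUP_least)
      fix E assume "E \<in> {E. separated X d T n e E}"
      then have "card E = 0" using False by auto
      then show "ereal (real (card E)) \<le> 0" by simp
    qed
    then have "?s = 0" using sep_nonneg[of X d T n e] by simp
    then show ?thesis by simp
  qed
  then show ?thesis unfolding log_sep_rate_def using False by simp
qed

lemma rate_bound:
  assumes XZ: "X \<subseteq> Zspace" and sp: "\<forall>x\<in>X. Spaced D (fst x)" and D: "D \<ge> 1"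
    and e: "e > 0" and dl: "\<delta> > 0"
  shows "limsup (log_sep_rate X dZ Tmap e) \<le> ereal ((ln (2 * real D + 1) + 2*ln 3)/D + \<delta>)"
proof -
  obtain M where M: "3 powr - real (Suc M) \<le> e" using exists_M[OF e] by blast
  define c where "c = (ln (2 * real D + 1) + 2*ln 3)/D"
  define C where "C = D * ln 3 + (M/D + 1) * ln (2 * real D + 1) + (2*M+2*D+1) * ln 3"
  have C0: "C \<ge> 0" unfolding C_def by (intro add_nonneg_nonneg mult_nonneg_nonneg) auto
  define n0 where "n0 = nat \<lceil>C/\<delta>\<rceil> + 1"
  have ev: "\<forall>n\<ge>n0. log_sep_rate X dZ Tmap e n \<le> ereal (c + \<delta>)"
  proof (intro allI impI)
    fix n assume n: "n \<ge> n0"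
    then have n1: "n \<ge> 1" unfolding n0_def by simp
    define Nn where "Nn = 3^D * (2*D+1)^((n+M) div D + 1) * 3^(2*(M + D + n div D) + 1)"
    define N where "N = real Nn"
    have sN: "sep_num X dZ Tmap n e \<le> ereal N" unfolding N_def Nn_def using sep_bound[OF XZ sp D M] .
    have "Nn > 0" unfolding Nn_def by simp
    then have "Nn \<ge> 1" by simp
    then have N1: "N \<ge> 1" unfolding N_def by simp
    have lnN: "ln N = D * ln 3 + real ((n+M) div D + 1) * ln (2 * real D + 1) + real (2*(M + D + n div D) + 1) * ln 3"
    proof -
      define R where "R = (n+M) div D + 1"
      define Ex where "Ex = 2*(M + D + n div D) + 1"
      have "N = 3^D * (2*real D+1)^R * 3^Ex" unfolding N_def Nn_def R_def[symmetric] Ex_def[symmetric] by (simp add: add.commute)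
      then have "ln N = D * ln 3 + real R * ln (2 * real D + 1) + real Ex * ln 3" by (simp add: ln_mult_pos ln_realpow)
      then show ?thesis unfolding R_def Ex_def .
    qed
    have Dp: "real D > 0" using D by simp
    have r1: "real ((n+M) div D) \<le> (real n + M) / D" using div_real_le[of D "n+M"] D by simp
    have r2: "real (n div D) \<le> real n / D" using div_real_le[of D n] D by simp
    have l3: "ln (3::real) \<ge> 0" and l2: "ln (2 * real D + 1) \<ge> 0" by auto
    have "real ((n+M) div D + 1) * ln (2 * real D + 1) \<le> ((real n + M)/D + 1) * ln (2 * real D + 1)"
      using r1 l2 by (intro mult_right_mono) auto
    moreover have "real (2*(M + D + n div D) + 1) * ln 3 \<le> (2*M + 2*D + 2*(real n/D) + 1) * ln 3"
      using r2 l3 by (intro mult_right_mono) auto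
    ultimately have "ln N \<le> D * ln 3 + ((real n + M)/D + 1) * ln (2 * real D + 1) + (2*M + 2*D + 2*(real n/D) + 1) * ln 3"
      using lnN by linarith
    also have "\<dots> = C + real n * c" unfolding C_def c_def using Dp by (simp add: field_simps)
    finally have lnN': "ln N \<le> C + real n * c" .
    have "real n \<ge> C / \<delta>" using n unfolding n0_def by linarith
    then have "C \<le> real n * \<delta>" using dl by (simp add: field_simps)
    then have "ln N \<le> real n * (c + \<delta>)" using lnN' by (simp add: algebra_simps)
    then have lnNd: "ln N / real n \<le> c + \<delta>" using n1 by (simp add: divide_le_eq mult.commute)
    let ?s = "sep_num X dZ Tmap n e"
    have sfin: "?s \<noteq> \<infinity>" using sN by auto
    have s0: "?s \<ge> 0" by (rule sep_nonneg)
    obtain t where t: "?s = ereal t" using sfin s0 by (cases ?s) auto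
    have t0: "t \<ge> 0" "t \<le> N" using t s0 sN by auto
    have "ln t \<le> ln N"
    proof (cases "t = 0")
      case True then show ?thesis using N1 by simp
    next
      case False then show ?thesis using t0 N1 by simp
    qed
    then have "ln t / real n \<le> ln N / real n" using n1 by (intro divide_right_mono) auto
    then have "ln t / real n \<le> c + \<delta>" using lnNd by linarith
    then show "log_sep_rate X dZ Tmap e n \<le> ereal (c + \<delta>)"
      unfolding log_sep_rate_def using t by simp
  qed
  have "limsup (log_sep_rate X dZ Tmap e) \<le> ereal (c + \<delta>)"
    by (rule Limsup_bounded) (use ev in \<open>auto simp: eventually_sequentially\<close>)
  then show ?thesis unfolding c_def .
qed

lemma small_c: "\<epsilon> > 0 \<Longrightarrow> \<exists>X0::real. \<forall>x\<ge>X0. (ln (2 * x + 1) + 2 * ln 3) / x < \<epsilon>"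
proof -
  assume eps: "\<epsilon> > 0"
  have "((\<lambda>x::real. (ln (2 * x + 1) + 2 * ln 3) / x) \<longlongrightarrow> 0) at_top" by real_asymp
  then have "eventually (\<lambda>x::real. (ln (2 * x + 1) + 2 * ln 3) / x < \<epsilon>) at_top"
    using eps by (rule order_tendstoD)
  then show ?thesis by (simp add: eventually_at_top_linorder)
qed

context qsetting
begin

lemma X_sub: "Xset q i \<subseteq> Zspace" unfolding Xset_def dclosure_def by auto

lemma X_spaced:
  assumes K: "K \<ge> 1"
  shows "\<forall>x\<in>Xset q i. Spaced (Q K) (fst x)"
proof
  fix x assume x: "x \<in> Xset q i"
  let ?U = "\<Union>n. (Tmap ^^ n) ` (Pset q i \<times> Zspace2)"
  have "\<forall>u\<in>?U. Spaced (Q K) (fst u)"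
  proof
    fix u assume "u \<in> ?U"
    then obtain m p z where u: "u = (Tmap^^m) (p, z)" "p \<in> Pset q i" by blast
    have "\<forall>n\<ge>1. fst u n = p (n + m)" using Tmap_iter[of m "(p,z)"] u by simp
    then show "Spaced (Q K) (fst u)" using spaced_shift[OF P_spaced[OF u(2) K] Q_pos[OF K]] by blast
  qed
  then show "Spaced (Q K) (fst x)" using closure_spaced x unfolding Xset_def by blast
qed

lemma entropy_zero: "top_entropy (Xset q i) dZ Tmap = 0"
proof -
  let ?X = "Xset q i"
  have up: "limsup (log_sep_rate ?X dZ Tmap e) \<le> 0" if e: "e > 0" for e
  proof (rule ereal_le_epsilon2)
    fix \<epsilon> :: real assume eps: "\<epsilon> > 0"
    obtain X0 where X0: "\<forall>x\<ge>X0. (ln (2 * x + 1) + 2 * ln 3) / x < \<epsilon>/2" using small_c[of "\<epsilon>/2"] eps by auto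
    define K where "K = max 1 (nat \<lceil>X0\<rceil>)"
    have K: "K \<ge> 1" unfolding K_def by simp
    have "real (Q K) \<ge> real K" using Q_ge[OF K] by simp
    moreover have "real K \<ge> X0" unfolding K_def by linarith
    ultimately have c: "(ln (2 * real (Q K) + 1) + 2 * ln 3) / real (Q K) < \<epsilon>/2" using X0 by auto
    have "limsup (log_sep_rate ?X dZ Tmap e) \<le> ereal ((ln (2 * real (Q K) + 1) + 2 * ln 3) / real (Q K) + \<epsilon>/2)"
      using rate_bound[OF X_sub X_spaced[OF K] Q_pos[OF K] e, of "\<epsilon>/2"] eps by simp
    also have "\<dots> \<le> 0 + ereal \<epsilon>"
    proof -
      have "(ln (2 * real (Q K) + 1) + 2 * ln 3) / real (Q K) + \<epsilon>/2 \<le> \<epsilon>" using c by linarith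
      then show ?thesis by simp
    qed
    finally show "limsup (log_sep_rate ?X dZ Tmap e) \<le> 0 + ereal \<epsilon>" .
  qed
  have low: "limsup (log_sep_rate ?X dZ Tmap 1) \<ge> 0"
  proof -
    have "limsup (\<lambda>_::nat. 0::ereal) \<le> limsup (log_sep_rate ?X dZ Tmap 1)"
      by (rule Limsup_mono) (simp add: log_rate_nonneg)
    then show ?thesis by (simp add: Limsup_const)
  qed
  have "top_entropy ?X dZ Tmap \<le> 0" unfolding top_entropy_def
    by (rule SUP_least) (use up in auto)
  moreover have "top_entropy ?X dZ Tmap \<ge> 0" unfolding top_entropy_def
    using low by (intro SUP_upper2[of 1]) auto
  ultimately show ?thesis by simp
qed

end

theorem mainTheorem6:
  fixes tau :: "nat \<Rightarrow> real" and q :: "nat \<Rightarrow> nat"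
  assumes tau_pos: "\<forall>n. tau n > 0"
    and tau_noninc: "\<forall>m n. m \<le> n \<longrightarrow> tau n \<le> tau m"
    and tau_lim: "tau \<longlonglongrightarrow> 0"
    and q1: "q 1 \<ge> 2"
    and q_inc: "\<forall>k\<ge>1. q k < q (Suc k)"
    and cond_i: "\<forall>k\<ge>1. q (Suc k) > q k ^ 4 + 3 * q k"
    and cond_ii: "\<forall>k\<ge>1. tau (nat \<lceil>real (q (Suc k)) / 3\<rceil>) < 1 / (16 * real (q k))"
  shows "\<forall>i\<in>{0,1,2,3::nat}. top_entropy (Xset q i) dZ Tmap = 0"
proof
  fix i :: nat assume i: "i \<in> {0,1,2,3}"
  interpret qsetting q i using q1 q_inc cond_i i by unfold_locales auto
  show "top_entropy (Xset q i) dZ Tmap = 0" by (rule entropy_zero)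
qed

end
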